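(* Let $G$ be a finite group. Then $G$ is a nested GVZ-group if and only if $U(G/N)>1$ for every proper normal subgroup $N$ of $G$.
   Context: All groups are finite. For $\chi\in\mathrm{Irr}(G)$, the center of $\chi$ is $Z(\chi)=\{g\in G : |\chi(g)|=\chi(1)\}$. A group is nested if for any two of its irreducible characters $\chi,\psi$ either $Z(\chi)\le Z(\psi)$ or $Z(\psi)\le Z(\chi)$. A group is a GVZ-group if every irreducible character vanishes on the complement of its center. For a group $H$ and a normal subgroup $M$ of $H$, $\mathrm{Irr}(H\mid M)$ is the set of $\chi\in\mathrm{Irr}(H)$ with $M\not\le\ker(\chi)$, and $V(H\mid M)$ is the subgroup generated by all $h\in H$ such that $\chi(h)\neq 0$ for some $\chi\in\mathrm{Irr}(H\mid M)$ (with $V(H\mid 1)=1$). For a normal subgroup $L$ of $H$, $U(H\mid L)$ is the product of all normal subgroups $M$ of $H$ with $V(H\mid M)\le L$, and $U(H)=U(H\mid Z(H))$. Here $U(G/N)$ is computed in the group $H=G/N$. *)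

theory Defs
  imports Complex_Main "HOL-Algebra.Algebra" "Jordan_Normal_Form.Matrix"
begin

definition mtrace :: "complex mat \<Rightarrow> complex" where
  "mtrace A = (\<Sum>i<dim_row A. A $$ (i, i))"

definition is_rep :: "('a, 'b) monoid_scheme \<Rightarrow> nat \<Rightarrow> ('a \<Rightarrow> complex mat) \<Rightarrow> bool" where
  "is_rep G n \<rho> \<longleftrightarrow> n > 0 \<and>
     (\<forall>g\<in>carrier G. \<rho> g \<in> carrier_mat n n) \<and>
     \<rho> \<one>\<^bsub>G\<^esub> = 1\<^sub>m n \<and>
     (\<forall>g\<in>carrier G. \<forall>h\<in>carrier G. \<rho> (g \<otimes>\<^bsub>G\<^esub> h) = \<rho> g * \<rho> h)"

definition is_subspace :: "nat \<Rightarrow> complex vec set \<Rightarrow> bool" where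
  "is_subspace n W \<longleftrightarrow> W \<subseteq> carrier_vec n \<and> 0\<^sub>v n \<in> W \<and>
     (\<forall>v\<in>W. \<forall>w\<in>W. v + w \<in> W) \<and> (\<forall>c. \<forall>v\<in>W. c \<cdot>\<^sub>v v \<in> W)"

definition irreducible_rep :: "('a, 'b) monoid_scheme \<Rightarrow> nat \<Rightarrow> ('a \<Rightarrow> complex mat) \<Rightarrow> bool" where
  "irreducible_rep G n \<rho> \<longleftrightarrow> is_rep G n \<rho> \<and>
     (\<forall>W. is_subspace n W \<and> (\<forall>g\<in>carrier G. \<forall>w\<in>W. \<rho> g *\<^sub>v w \<in> W)
          \<longrightarrow> W = {0\<^sub>v n} \<or> W = carrier_vec n)"

definition Irr :: "('a, 'b) monoid_scheme \<Rightarrow> ('a \<Rightarrow> complex) set" where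
  "Irr G = {\<chi>. \<exists>n \<rho>. irreducible_rep G n \<rho> \<and> \<chi> = (\<lambda>g\<in>carrier G. mtrace (\<rho> g))}"

definition char_center :: "('a, 'b) monoid_scheme \<Rightarrow> ('a \<Rightarrow> complex) \<Rightarrow> 'a set" where
  "char_center G \<chi> = {g \<in> carrier G. cmod (\<chi> g) = cmod (\<chi> \<one>\<^bsub>G\<^esub>)}"

definition char_ker :: "('a, 'b) monoid_scheme \<Rightarrow> ('a \<Rightarrow> complex) \<Rightarrow> 'a set" where
  "char_ker G \<chi> = {g \<in> carrier G. \<chi> g = \<chi> \<one>\<^bsub>G\<^esub>}"

definition nested_group :: "('a, 'b) monoid_scheme \<Rightarrow> bool" where
  "nested_group G \<longleftrightarrow> (\<forall>\<chi>\<in>Irr G. \<forall>\<psi>\<in>Irr G.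
      char_center G \<chi> \<subseteq> char_center G \<psi> \<or> char_center G \<psi> \<subseteq> char_center G \<chi>)"

definition GVZ_group :: "('a, 'b) monoid_scheme \<Rightarrow> bool" where
  "GVZ_group G \<longleftrightarrow> (\<forall>\<chi>\<in>Irr G. \<forall>g\<in>carrier G - char_center G \<chi>. \<chi> g = 0)"

definition group_center :: "('a, 'b) monoid_scheme \<Rightarrow> 'a set" where
  "group_center G = {z \<in> carrier G. \<forall>g\<in>carrier G. z \<otimes>\<^bsub>G\<^esub> g = g \<otimes>\<^bsub>G\<^esub> z}"

definition Irr_rel :: "('a, 'b) monoid_scheme \<Rightarrow> 'a set \<Rightarrow> ('a \<Rightarrow> complex) set" where
  "Irr_rel H M = {\<chi> \<in> Irr H. \<not> M \<subseteq> char_ker H \<chi>}"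

text \<open>V(H|M); note that Irr(H|1) is empty, so this gives V(H|1) = 1 automatically.\<close>
definition V_rel :: "('a, 'b) monoid_scheme \<Rightarrow> 'a set \<Rightarrow> 'a set" where
  "V_rel H M = generate H {h \<in> carrier H. \<exists>\<chi>\<in>Irr_rel H M. \<chi> h \<noteq> 0}"

text \<open>U(H|L): the product (= subgroup generated by the union) of all normal subgroups
  M of H with V(H|M) contained in L.\<close>
definition U_rel :: "('a, 'b) monoid_scheme \<Rightarrow> 'a set \<Rightarrow> 'a set" where
  "U_rel H L = generate H (\<Union>{M. M \<lhd> H \<and> V_rel H M \<subseteq> L})"

definition U_grp :: "('a, 'b) monoid_scheme \<Rightarrow> 'a set" where
  "U_grp H = U_rel H (group_center H)"

end

theory Submission
  imports Defs "Jordan_Normal_Form.Jordan_Normal_Form_Existence" "Jordan_Normal_Form.Spectral_Radius"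
begin


lemma jb_pow_one:
  assumes h: "jordan_block m (a::complex) ^\<^sub>m k = 1\<^sub>m m" and k: "k > 0" and m: "m > 0"
  shows "m = 1 \<and> a ^ k = 1"
proof -
  have "(jordan_block m a ^\<^sub>m k) $$ (0,0) = 1" using h m by simp
  hence ak: "a ^ k = 1" using m by (simp add: jordan_block_pow)
  have a0: "a \<noteq> 0"
  proof
    assume "a = 0" hence "a ^ k = 0" using k by simp
    thus False using ak by simp
  qed
  have "m = 1"
  proof (rule ccontr)
    assume "m \<noteq> 1" hence m2: "1 < m" using m by simp
    have "(jordan_block m a ^\<^sub>m k) $$ (0,1) = 0" using h m2 by simp
    hence "of_nat k * a ^ (k - 1) = 0" using m2 by (simp add: jordan_block_pow)
    thus False using k a0 by simp
  qed
  with ak show ?thesis by simp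
qed

lemma four_block_eq_parts:
  assumes "four_block_mat A B C D = four_block_mat A' B' C' D'"
    and "A \<in> carrier_mat m m" "A' \<in> carrier_mat m m" "D \<in> carrier_mat s s" "D' \<in> carrier_mat s s"
  shows "A = A' \<and> D = D'"
proof
  show "A = A'"
  proof (rule eq_matI)
    fix i j assume "i < dim_row A'" "j < dim_col A'"
    thus "A $$ (i,j) = A' $$ (i,j)"
      using arg_cong[OF assms(1), of "\<lambda>M. M $$ (i,j)"] assms(2-5) by auto
  qed (use assms in auto)
  show "D = D'"
  proof (rule eq_matI)
    fix i j assume "i < dim_row D'" "j < dim_col D'"
    thus "D $$ (i,j) = D' $$ (i,j)"
      using arg_cong[OF assms(1), of "\<lambda>M. M $$ (i+m,j+m)"] assms(2-5) by auto
  qed (use assms in auto)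
qed

lemma jm_pow_one:
  assumes "jordan_matrix n_as ^\<^sub>m k = 1\<^sub>m (sum_list (map fst n_as))"
    and "(m,a) \<in> set n_as"
  shows "jordan_block m (a::complex) ^\<^sub>m k = 1\<^sub>m m"
  using assms
proof (induction n_as)
  case Nil then show ?case by simp
next
  case (Cons na rest)
  obtain m0 a0 where na: "na = (m0,a0)" by force
  let ?s = "sum_list (map fst rest)"
  have "jordan_matrix (na # rest) ^\<^sub>m k =
     four_block_mat (jordan_block m0 a0 ^\<^sub>m k) (0\<^sub>m m0 ?s) (0\<^sub>m ?s m0) (jordan_matrix rest ^\<^sub>m k)"
    unfolding jordan_matrix_pow na
    by (simp add: Let_def jordan_matrix_pow[symmetric] dim_diag_block_mat o_def case_prod_beta)
  also have "jordan_matrix (na # rest) ^\<^sub>m k = 1\<^sub>m (m0 + ?s)" using Cons.prems na by simp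
  also have "\<dots> = four_block_mat (1\<^sub>m m0) (0\<^sub>m m0 ?s) (0\<^sub>m ?s m0) (1\<^sub>m ?s)" by simp
  finally have eq0: "four_block_mat (jordan_block m0 a0 ^\<^sub>m k) (0\<^sub>m m0 ?s) (0\<^sub>m ?s m0) (jordan_matrix rest ^\<^sub>m k) = four_block_mat (1\<^sub>m m0) (0\<^sub>m m0 ?s) (0\<^sub>m ?s m0) (1\<^sub>m ?s)" by (rule sym)
  have eq: "jordan_block m0 a0 ^\<^sub>m k = 1\<^sub>m m0 \<and> jordan_matrix rest ^\<^sub>m k = 1\<^sub>m ?s"
    using four_block_eq_parts[OF eq0, of m0 ?s] by auto
  show ?case
  proof (cases "(m,a) = na")
    case True then show ?thesis using eq na by simp
  next
    case False then show ?thesis using Cons eq by simp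
  qed
qed

lemma jm_diag:
  assumes "\<forall>(m,a)\<in>set n_as. m = 1"
  shows "jordan_matrix n_as = mat (length n_as) (length n_as) (\<lambda>(i,j). if i = j then snd (n_as ! i) else (0::complex))"
  using assms
proof (induction n_as)
  case Nil
  then show ?case by (auto simp: jordan_matrix_def intro!: eq_matI)
next
  case (Cons na rest)
  obtain m0 a0 where na: "na = (m0,a0)" by force
  have m0: "m0 = 1" using Cons.prems na by auto
  have IH: "jordan_matrix rest = mat (length rest) (length rest) (\<lambda>(i,j). if i = j then snd (rest ! i) else 0)"
    using Cons by auto
  have s: "sum_list (map fst rest) = length rest"
    using Cons.prems by (induction rest) auto
  show ?case unfolding na m0 jordan_matrix_Cons s IH
    by (rule eq_matI) (auto simp: jordan_block_def nth_Cons')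
qed

lemma mtrace_mult_comm:
  assumes A: "A \<in> carrier_mat n m" and B: "B \<in> carrier_mat m n"
  shows "mtrace (A * B) = mtrace (B * (A :: complex mat))"
proof -
  have "mtrace (A * B) = (\<Sum>i<n. \<Sum>j<m. A $$ (i,j) * B $$ (j,i))"
    unfolding mtrace_def using A B
    by (auto simp: scalar_prod_def atLeast0LessThan intro!: sum.cong)
  also have "\<dots> = (\<Sum>j<m. \<Sum>i<n. B $$ (j,i) * A $$ (i,j))"
    by (subst sum.swap) (simp add: mult.commute)
  also have "\<dots> = mtrace (B * A)"
    unfolding mtrace_def using A B
    by (auto simp: scalar_prod_def atLeast0LessThan intro!: sum.cong)
  finally show ?thesis .
qed

lemma triangle_eq:
  fixes z :: "nat \<Rightarrow> complex"
  assumes n: "n > 0" and z1: "\<And>i. i < n \<Longrightarrow> cmod (z i) = 1"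
    and s: "cmod (\<Sum>i<n. z i) = real n"
  shows "\<And>i. i < n \<Longrightarrow> z i = z 0"
proof -
  define S where "S = (\<Sum>i<n. z i)"
  define w where "w = cnj S / of_nat n"
  have cS: "cmod (cnj S) = real n" using s unfolding S_def by (simp only: complex_mod_cnj)
  have cw: "cmod w = 1" using cS n unfolding w_def by (simp add: norm_divide)
  have le: "Re (w * z i) \<le> 1" if "i < n" for i
    using complex_Re_le_cmod[of "w * z i"] cw z1[OF that] by (simp add: norm_mult)
  have "(\<Sum>i<n. Re (w * z i)) = Re (w * S)"
    unfolding S_def by (simp add: sum_distrib_left)
  also have "w * S = of_real ((cmod S)^2) / of_nat n"
    unfolding w_def using complex_norm_square[of S] by (simp add: mult.commute)
  also have "Re \<dots> = real n" using s n unfolding S_def by (simp add: power2_eq_square)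
  finally have sumeq: "(\<Sum>i<n. Re (w * z i)) = real n" .
  have "(\<Sum>i<n. 1 - Re (w * z i)) = 0" using sumeq by (simp add: sum_subtractf)
  hence all: "\<forall>i\<in>{..<n}. 1 - Re (w * z i) = 0"
    using sum_nonneg_eq_0_iff[of "{..<n}" "\<lambda>i. 1 - Re (w * z i)"] le by (simp del: times_complex.sel)
  have one: "w * z i = 1" if "i < n" for i
  proof -
    have r: "Re (w * z i) = 1" using all that by auto
    have c: "cmod (w * z i) = 1" using cw z1[OF that] by (simp add: norm_mult)
    have "(Re (w * z i))^2 + (Im (w * z i))^2 = 1"
      using c by (metis cmod_power2 one_power2)
    hence "Im (w * z i) = 0" using r by simp
    thus ?thesis using r by (simp add: complex_eq_iff)
  qed
  fix i assume "i < n"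
  hence "w * z i = w * z 0" using one n by simp
  moreover have "w \<noteq> 0" using cw by auto
  ultimately show "z i = z 0" by simp
qed

lemma mtrace_smult_one: "mtrace (c \<cdot>\<^sub>m 1\<^sub>m n) = c * of_nat n"
  unfolding mtrace_def by simp

lemma scalar_of_finite_order:
  fixes A :: "complex mat"
  assumes A: "A \<in> carrier_mat n n" and k: "k > 0" and pow: "A ^\<^sub>m k = 1\<^sub>m n"
    and tr: "cmod (mtrace A) = real n"
  shows "\<exists>c. A = c \<cdot>\<^sub>m 1\<^sub>m n"
proof (cases "n = 0")
  case True
  then show ?thesis using A by (auto intro!: exI[of _ 0] eq_matI)
next
  case False
  hence n: "n > 0" by simp
  obtain as where "char_poly A = (\<Prod>a\<leftarrow>as. [:- a, 1:])" using char_poly_factorized[OF A] by blast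
  from jordan_nf_exists[OF A this] obtain n_as where jnf: "jordan_nf A n_as" by blast
  define J where "J = jordan_matrix n_as"
  from jnf have nz: "0 \<notin> fst ` set n_as" and "similar_mat A J" unfolding jordan_nf_def J_def by auto
  then obtain P Q where wit: "similar_mat_wit A J P Q" unfolding similar_mat_def by blast
  have dA: "dim_row A = n" using A by simp
  from wit have P: "P \<in> carrier_mat n n" and Q: "Q \<in> carrier_mat n n" and J: "J \<in> carrier_mat n n"
    and PQ: "P * Q = 1\<^sub>m n" and QP: "Q * P = 1\<^sub>m n" and AJ: "A = P * J * Q"
    unfolding similar_mat_wit_def Let_def dA by auto
  have Ak: "A ^\<^sub>m k = P * J ^\<^sub>m k * Q" using similar_mat_wit_pow_id[OF wit] .
  have Jk: "J ^\<^sub>m k \<in> carrier_mat n n" using J by simp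
  have "J ^\<^sub>m k = (Q * P) * J ^\<^sub>m k * (Q * P)" using QP Jk by (simp add: left_mult_one_mat right_mult_one_mat)
  also have "\<dots> = Q * (P * J ^\<^sub>m k * Q) * P"
    using P Q Jk by (simp add: assoc_mult_mat[of _ n n _ n _ n])
  also have "\<dots> = Q * 1\<^sub>m n * P" by (simp only: Ak[symmetric] pow)
  also have "\<dots> = 1\<^sub>m n" using QP Q by (simp add: right_mult_one_mat)
  finally have Jk1: "J ^\<^sub>m k = 1\<^sub>m n" .
  have sn: "sum_list (map fst n_as) = n" using J unfolding J_def by (metis carrier_matD(1) jordan_matrix_dim(1))
  have blocks: "m = 1 \<and> a ^ k = 1" if "(m,a) \<in> set n_as" for m a
  proof -
    have "jordan_block m a ^\<^sub>m k = 1\<^sub>m m"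
      using jm_pow_one[of n_as k m a] Jk1 that sn unfolding J_def by simp
    moreover have "m > 0" using nz that by (metis fst_conv gr0I image_eqI)
    ultimately show ?thesis using jb_pow_one k by blast
  qed
  hence ones: "\<forall>(m,a)\<in>set n_as. m = 1" by auto
  have len: "length n_as = n" using ones sn by (induction n_as arbitrary: n) auto
  define z where "z i = snd (n_as ! i)" for i
  have Jd: "J = mat n n (\<lambda>(i,j). if i = j then z i else 0)"
    using jm_diag[OF ones] len unfolding J_def z_def by simp
  have zk: "z i ^ k = 1" if "i < n" for i
    using blocks[of "fst (n_as ! i)" "snd (n_as ! i)"] that len unfolding z_def by (simp add: nth_mem)
  have z1: "cmod (z i) = 1" if "i < n" for i
    using power_eq_1_iff[OF zk[OF that]] k by simp
  have "mtrace A = mtrace (P * (J * Q))" using AJ P J Q by (simp add: assoc_mult_mat[of _ n n _ n _ n])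
  also have "\<dots> = mtrace ((J * Q) * P)" by (rule mtrace_mult_comm[of _ n n], use P J Q in auto)
  also have "\<dots> = mtrace J" using J Q P QP by (simp add: assoc_mult_mat[of _ n n _ n _ n])
  also have "\<dots> = (\<Sum>i<n. z i)" unfolding Jd mtrace_def by simp
  finally have "cmod (\<Sum>i<n. z i) = real n" using tr by simp
  from triangle_eq[OF n z1 this] have zz: "\<And>i. i < n \<Longrightarrow> z i = z 0" .
  have "J = z 0 \<cdot>\<^sub>m 1\<^sub>m n" by (rule eq_matI) (auto simp: Jd intro: zz)
  hence "A = P * (z 0 \<cdot>\<^sub>m 1\<^sub>m n) * Q" using AJ by simp
  also have "\<dots> = (z 0 \<cdot>\<^sub>m P) * Q" using P by (simp add: mult_smult_distrib[OF P, of _ n])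
  also have "\<dots> = z 0 \<cdot>\<^sub>m (P * Q)" using P Q by (simp add: mult_smult_assoc_mat[OF P Q])
  finally have "A = z 0 \<cdot>\<^sub>m (P * Q)" .
  thus ?thesis using PQ by auto
qed



lemma rep_carrier: "is_rep H n \<rho> \<Longrightarrow> g \<in> carrier H \<Longrightarrow> \<rho> g \<in> carrier_mat n n"
  unfolding is_rep_def by auto

lemma rep_mult: "is_rep H n \<rho> \<Longrightarrow> g \<in> carrier H \<Longrightarrow> h \<in> carrier H \<Longrightarrow> \<rho> (g \<otimes>\<^bsub>H\<^esub> h) = \<rho> g * \<rho> h"
  unfolding is_rep_def by auto

lemma rep_one: "is_rep H n \<rho> \<Longrightarrow> \<rho> \<one>\<^bsub>H\<^esub> = 1\<^sub>m n"
  unfolding is_rep_def by auto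

lemma rep_pos: "is_rep H n \<rho> \<Longrightarrow> n > 0"
  unfolding is_rep_def by auto

lemma rep_inv:
  assumes "group H" "is_rep H n \<rho>" "g \<in> carrier H"
  shows "\<rho> (inv\<^bsub>H\<^esub> g) * \<rho> g = 1\<^sub>m n" "\<rho> g * \<rho> (inv\<^bsub>H\<^esub> g) = 1\<^sub>m n"
proof -
  interpret group H by fact
  show "\<rho> (inv\<^bsub>H\<^esub> g) * \<rho> g = 1\<^sub>m n"
    using rep_mult[OF assms(2), of "inv\<^bsub>H\<^esub> g" g] rep_one[OF assms(2)] assms(3) by simp
  show "\<rho> g * \<rho> (inv\<^bsub>H\<^esub> g) = 1\<^sub>m n"
    using rep_mult[OF assms(2), of g "inv\<^bsub>H\<^esub> g"] rep_one[OF assms(2)] assms(3) by simp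
qed

lemma rep_pow:
  assumes "group H" "is_rep H n \<rho>" "g \<in> carrier H"
  shows "\<rho> (g [^]\<^bsub>H\<^esub> (m::nat)) = \<rho> g ^\<^sub>m m"
proof (induction m)
  case 0
  then show ?case using rep_one[OF assms(2)] rep_carrier[OF assms(2,3)] by simp
next
  case (Suc m)
  interpret group H by fact
  show ?case using Suc rep_mult[OF assms(2), of "g [^]\<^bsub>H\<^esub> m" g] assms(3) by simp
qed

lemma rep_finite_order:
  assumes "group H" "finite (carrier H)" "is_rep H n \<rho>" "g \<in> carrier H"
  shows "\<exists>k>0. \<rho> g ^\<^sub>m k = 1\<^sub>m n"
proof -
  interpret group H by fact
  have "ord g \<ge> 1" using ord_ge_1[OF assms(2,4)] .
  moreover have "\<rho> g ^\<^sub>m (ord g) = 1\<^sub>m n"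
    using rep_pow[OF assms(1,3,4), of "ord g"] rep_one[OF assms(3)] assms(4) by simp
  ultimately show ?thesis by (intro exI[of _ "ord g"]) auto
qed

lemma mtrace_one: "mtrace (1\<^sub>m n) = of_nat n"
  unfolding mtrace_def by simp

lemma rep_scalar:
  assumes "group H" "finite (carrier H)" "is_rep H n \<rho>" "g \<in> carrier H"
    and "cmod (mtrace (\<rho> g)) = real n"
  shows "\<exists>c. \<rho> g = c \<cdot>\<^sub>m 1\<^sub>m n"
proof -
  obtain k where "k > 0" "\<rho> g ^\<^sub>m k = 1\<^sub>m n" using rep_finite_order[OF assms(1-4)] by blast
  thus ?thesis using scalar_of_finite_order[OF rep_carrier[OF assms(3,4)]] assms(5) by blast
qed

lemma rep_ker:
  assumes "group H" "finite (carrier H)" "is_rep H n \<rho>" "g \<in> carrier H"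
    and "mtrace (\<rho> g) = of_nat n"
  shows "\<rho> g = 1\<^sub>m n"
proof -
  have "cmod (mtrace (\<rho> g)) = real n" using assms(5) by simp
  then obtain c where c: "\<rho> g = c \<cdot>\<^sub>m 1\<^sub>m n" using rep_scalar[OF assms(1-4)] by blast
  hence "c * of_nat n = of_nat n" using assms(5) mtrace_smult_one by metis
  hence "c = 1" using rep_pos[OF assms(3)] by simp
  thus ?thesis using c by (auto intro!: eq_matI)
qed

lemma smult_one_pow: "(c \<cdot>\<^sub>m 1\<^sub>m n) ^\<^sub>m k = (c ^ k) \<cdot>\<^sub>m (1\<^sub>m n :: 'a :: comm_ring_1 mat)"
proof (induction k)
  case 0 then show ?case by (auto intro!: eq_matI)
next
  case (Suc k) then show ?case by (auto intro!: eq_matI)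
qed

lemma mat_vec_unit: "(A :: complex mat) \<in> carrier_mat n n \<Longrightarrow> i < n \<Longrightarrow> j < n \<Longrightarrow> (A *\<^sub>v unit_vec n j) $ i = A $$ (i,j)"
  by (simp add: mult_mat_vec_def)

lemma schur:
  assumes irr: "irreducible_rep H n \<rho>" and z: "z \<in> carrier H"
    and comm: "\<And>h. h \<in> carrier H \<Longrightarrow> \<rho> z * \<rho> h = \<rho> h * \<rho> z"
  shows "\<exists>c. \<rho> z = c \<cdot>\<^sub>m 1\<^sub>m n"
proof -
  have rep: "is_rep H n \<rho>" using irr unfolding irreducible_rep_def by simp
  have n: "n > 0" using rep_pos[OF rep] .
  have Z: "\<rho> z \<in> carrier_mat n n" using rep_carrier[OF rep z] .
  obtain c where "eigenvalue (\<rho> z) c" using spectrum_non_empty[OF Z n] unfolding spectrum_def by auto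
  then obtain v where ev: "eigenvector (\<rho> z) v c" unfolding eigenvalue_def by auto
  have v: "v \<in> carrier_vec n" "v \<noteq> 0\<^sub>v n" "\<rho> z *\<^sub>v v = c \<cdot>\<^sub>v v"
    using ev Z unfolding eigenvector_def by auto
  define W where "W = {w \<in> carrier_vec n. \<rho> z *\<^sub>v w = c \<cdot>\<^sub>v w}"
  have sub: "is_subspace n W"
    unfolding is_subspace_def W_def
  proof (intro conjI ballI allI)
    show "0\<^sub>v n \<in> {w \<in> carrier_vec n. \<rho> z *\<^sub>v w = c \<cdot>\<^sub>v w}" using Z by (auto intro!: eq_vecI)
  next
    fix x y assume "x \<in> {w \<in> carrier_vec n. \<rho> z *\<^sub>v w = c \<cdot>\<^sub>v w}" "y \<in> {w \<in> carrier_vec n. \<rho> z *\<^sub>v w = c \<cdot>\<^sub>v w}"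
    thus "x + y \<in> {w \<in> carrier_vec n. \<rho> z *\<^sub>v w = c \<cdot>\<^sub>v w}"
      using Z by (auto simp: mult_add_distrib_mat_vec[OF Z] smult_add_distrib_vec)
  next
    fix a x assume "x \<in> {w \<in> carrier_vec n. \<rho> z *\<^sub>v w = c \<cdot>\<^sub>v w}"
    thus "a \<cdot>\<^sub>v x \<in> {w \<in> carrier_vec n. \<rho> z *\<^sub>v w = c \<cdot>\<^sub>v w}"
      using Z by (auto simp: mult_mat_vec[OF Z] smult_smult_assoc mult.commute)
  qed auto
  have inv: "\<forall>g\<in>carrier H. \<forall>w\<in>W. \<rho> g *\<^sub>v w \<in> W"
  proof (intro ballI)
    fix g w assume g: "g \<in> carrier H" and w: "w \<in> W"
    have G: "\<rho> g \<in> carrier_mat n n" using rep_carrier[OF rep g] .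
    have wc: "w \<in> carrier_vec n" and we: "\<rho> z *\<^sub>v w = c \<cdot>\<^sub>v w" using w unfolding W_def by auto
    have "\<rho> z *\<^sub>v (\<rho> g *\<^sub>v w) = (\<rho> z * \<rho> g) *\<^sub>v w" using Z G wc by simp
    also have "\<dots> = (\<rho> g * \<rho> z) *\<^sub>v w" using comm[OF g] by simp
    also have "\<dots> = \<rho> g *\<^sub>v (c \<cdot>\<^sub>v w)" using Z G wc we by simp
    also have "\<dots> = c \<cdot>\<^sub>v (\<rho> g *\<^sub>v w)" using mult_mat_vec[OF G wc] .
    finally show "\<rho> g *\<^sub>v w \<in> W" unfolding W_def using G wc by auto
  qed
  have "W = {0\<^sub>v n} \<or> W = carrier_vec n" using irr sub inv unfolding irreducible_rep_def by blast
  moreover have "v \<in> W" using v unfolding W_def by auto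
  ultimately have Wall: "W = carrier_vec n" using v by auto
  have "\<rho> z = c \<cdot>\<^sub>m 1\<^sub>m n"
  proof (rule eq_matI)
    fix i j assume ij: "i < dim_row (c \<cdot>\<^sub>m 1\<^sub>m n)" "j < dim_col (c \<cdot>\<^sub>m 1\<^sub>m n)"
    hence "unit_vec n j \<in> W" using Wall by simp
    hence "\<rho> z *\<^sub>v unit_vec n j = c \<cdot>\<^sub>v unit_vec n j" unfolding W_def by simp
    hence "(\<rho> z *\<^sub>v unit_vec n j) $ i = (c \<cdot>\<^sub>v unit_vec n j) $ i" by simp
    thus "\<rho> z $$ (i,j) = (c \<cdot>\<^sub>m 1\<^sub>m n) $$ (i,j)" using ij mat_vec_unit[OF Z, of i j] by auto
  qed (use Z in auto)
  thus ?thesis by blast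
qed

lemma schur_cmod:
  assumes "group H" "finite (carrier H)" "irreducible_rep H n \<rho>" "z \<in> carrier H"
    and comm: "\<And>h. h \<in> carrier H \<Longrightarrow> \<rho> z * \<rho> h = \<rho> h * \<rho> z"
  shows "cmod (mtrace (\<rho> z)) = real n"
proof -
  have rep: "is_rep H n \<rho>" using assms(3) unfolding irreducible_rep_def by simp
  obtain c where c: "\<rho> z = c \<cdot>\<^sub>m 1\<^sub>m n" using schur[OF assms(3,4) comm] by blast
  obtain k where k: "k > 0" "\<rho> z ^\<^sub>m k = 1\<^sub>m n" using rep_finite_order[OF assms(1,2) rep assms(4)] by blast
  have "(c ^ k \<cdot>\<^sub>m 1\<^sub>m n) $$ (0,0) = (1\<^sub>m n :: complex mat) $$ (0,0)"
    using k c smult_one_pow by metis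
  hence "c ^ k = 1" using rep_pos[OF rep] by simp
  hence "cmod c = 1" using power_eq_1_iff[of c k] k by simp
  thus ?thesis using c mtrace_smult_one[of c n] by (simp add: norm_mult)
qed



lemma IrrE:
  assumes "\<chi> \<in> Irr H"
  obtains n \<rho> where "irreducible_rep H n \<rho>" "\<chi> = (\<lambda>g\<in>carrier H. mtrace (\<rho> g))"
  using assms unfolding Irr_def by blast

lemma irr_rep: "irreducible_rep H n \<rho> \<Longrightarrow> is_rep H n \<rho>"
  unfolding irreducible_rep_def by simp

lemma char_one:
  fixes H :: "('a, 'b) monoid_scheme" (structure)
  assumes "group H" "irreducible_rep H n \<rho>" "\<chi> = (\<lambda>g\<in>carrier H. mtrace (\<rho> g))"
  shows "\<chi> \<one>\<^bsub>H\<^esub> = of_nat n"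
proof -
  interpret group H by fact
  show ?thesis using assms(3) rep_one[OF irr_rep[OF assms(2)]] mtrace_one by simp
qed

lemma char_ker_iff:
  assumes "group H" "finite (carrier H)" "irreducible_rep H n \<rho>" "\<chi> = (\<lambda>g\<in>carrier H. mtrace (\<rho> g))"
  shows "char_ker H \<chi> = {g \<in> carrier H. \<rho> g = 1\<^sub>m n}"
proof -
  have one: "\<chi> \<one>\<^bsub>H\<^esub> = of_nat n" using char_one[OF assms(1,3,4)] .
  show ?thesis
  proof (intro equalityI subsetI)
    fix g assume "g \<in> char_ker H \<chi>"
    hence g: "g \<in> carrier H" "mtrace (\<rho> g) = of_nat n" using one assms(4) unfolding char_ker_def by auto
    thus "g \<in> {g \<in> carrier H. \<rho> g = 1\<^sub>m n}" using rep_ker[OF assms(1,2) irr_rep[OF assms(3)]] by auto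
  next
    fix g assume "g \<in> {g \<in> carrier H. \<rho> g = 1\<^sub>m n}"
    thus "g \<in> char_ker H \<chi>" using one assms(4) mtrace_one unfolding char_ker_def by auto
  qed
qed

lemma char_ker_props:
  fixes H :: "('a, 'b) monoid_scheme" (structure)
  assumes "group H" "finite (carrier H)" "\<chi> \<in> Irr H"
  shows "\<one>\<^bsub>H\<^esub> \<in> char_ker H \<chi>"
    and "a \<in> char_ker H \<chi> \<Longrightarrow> b \<in> char_ker H \<chi> \<Longrightarrow> a \<otimes>\<^bsub>H\<^esub> b \<in> char_ker H \<chi>"
    and "a \<in> char_ker H \<chi> \<Longrightarrow> inv\<^bsub>H\<^esub> a \<in> char_ker H \<chi>"
    and "x \<in> carrier H \<Longrightarrow> a \<in> char_ker H \<chi> \<Longrightarrow> x \<otimes>\<^bsub>H\<^esub> a \<otimes>\<^bsub>H\<^esub> inv\<^bsub>H\<^esub> x \<in> char_ker H \<chi>"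
    and "char_ker H \<chi> \<subseteq> carrier H"
proof -
  interpret group H by fact
  obtain n \<rho> where irr: "irreducible_rep H n \<rho>" and chi: "\<chi> = (\<lambda>g\<in>carrier H. mtrace (\<rho> g))"
    using assms(3) by (rule IrrE)
  have rep: "is_rep H n \<rho>" using irr_rep[OF irr] .
  note K = char_ker_iff[OF assms(1,2) irr chi]
  show "\<one>\<^bsub>H\<^esub> \<in> char_ker H \<chi>" unfolding K using rep_one[OF rep] by simp
  show "char_ker H \<chi> \<subseteq> carrier H" unfolding K by auto
  show "a \<in> char_ker H \<chi> \<Longrightarrow> b \<in> char_ker H \<chi> \<Longrightarrow> a \<otimes>\<^bsub>H\<^esub> b \<in> char_ker H \<chi>"
    unfolding K using rep_mult[OF rep] by auto
  show "a \<in> char_ker H \<chi> \<Longrightarrow> inv\<^bsub>H\<^esub> a \<in> char_ker H \<chi>"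
  proof -
    assume "a \<in> char_ker H \<chi>"
    hence a: "a \<in> carrier H" "\<rho> a = 1\<^sub>m n" unfolding K by auto
    have "\<rho> (inv a) = \<rho> (inv a) * \<rho> a"
      using a rep_carrier[OF rep, of "inv a"] by simp
    also have "\<dots> = 1\<^sub>m n" using rep_inv[OF assms(1) rep a(1)] by simp
    finally show ?thesis unfolding K using a by simp
  qed
  show "x \<in> carrier H \<Longrightarrow> a \<in> char_ker H \<chi> \<Longrightarrow> x \<otimes>\<^bsub>H\<^esub> a \<otimes>\<^bsub>H\<^esub> inv\<^bsub>H\<^esub> x \<in> char_ker H \<chi>"
  proof -
    assume x: "x \<in> carrier H" and "a \<in> char_ker H \<chi>"
    hence a: "a \<in> carrier H" "\<rho> a = 1\<^sub>m n" unfolding K by auto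
    have "\<rho> (x \<otimes> a \<otimes> inv x) = \<rho> x * \<rho> a * \<rho> (inv x)"
      using rep_mult[OF rep] x a by simp
    also have "\<dots> = \<rho> x * \<rho> (inv x)" using a rep_carrier[OF rep x] by simp
    also have "\<dots> = 1\<^sub>m n" using rep_inv[OF assms(1) rep x] by simp
    finally show ?thesis unfolding K using a x by simp
  qed
qed

lemma kers_normal:
  fixes H :: "('a, 'b) monoid_scheme" (structure)
  assumes "group H" "finite (carrier H)" "T \<subseteq> Irr H"
  shows "{h \<in> carrier H. \<forall>\<chi>\<in>T. h \<in> char_ker H \<chi>} \<lhd> H"
proof -
  interpret group H by fact
  note P = char_ker_props[OF assms(1,2)]
  have sg: "subgroup {h \<in> carrier H. \<forall>\<chi>\<in>T. h \<in> char_ker H \<chi>} H"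
    by (rule subgroupI) (use assms(3) P in auto)
  show ?thesis
    by (rule normal_invI[OF sg]) (use assms(3) P in auto)
qed

lemma center_comm_ker:
  fixes H :: "('a, 'b) monoid_scheme" (structure)
  assumes "group H" "finite (carrier H)" "\<chi> \<in> Irr H" "d \<in> char_center H \<chi>" "h \<in> carrier H"
  shows "d \<otimes>\<^bsub>H\<^esub> h \<otimes>\<^bsub>H\<^esub> inv\<^bsub>H\<^esub> d \<otimes>\<^bsub>H\<^esub> inv\<^bsub>H\<^esub> h \<in> char_ker H \<chi>"
proof -
  interpret group H by fact
  obtain n \<rho> where irr: "irreducible_rep H n \<rho>" and chi: "\<chi> = (\<lambda>g\<in>carrier H. mtrace (\<rho> g))"
    using assms(3) by (rule IrrE)
  have rep: "is_rep H n \<rho>" using irr_rep[OF irr] .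
  have d: "d \<in> carrier H" using assms(4) unfolding char_center_def by auto
  have "cmod (mtrace (\<rho> d)) = real n"
    using assms(4) char_one[OF assms(1) irr chi] d chi unfolding char_center_def by auto
  then obtain c where c: "\<rho> d = c \<cdot>\<^sub>m 1\<^sub>m n" using rep_scalar[OF assms(1,2) rep d] by blast
  have h: "h \<in> carrier H" by fact
  have Hc: "\<rho> h \<in> carrier_mat n n" using rep_carrier[OF rep h] .
  have dh: "\<rho> (d \<otimes> h) = \<rho> (h \<otimes> d)"
    using rep_mult[OF rep d h] rep_mult[OF rep h d] c Hc
    by (simp add: mult_smult_distrib[OF Hc, of _ n] mult_smult_assoc_mat[of _ n n _ n])
  have "d \<otimes> h \<otimes> inv d \<otimes> inv h = (d \<otimes> h) \<otimes> (inv d \<otimes> inv h)" using d h by (simp add: m_assoc)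
  hence "\<rho> (d \<otimes> h \<otimes> inv d \<otimes> inv h) = \<rho> (h \<otimes> d) * \<rho> (inv d \<otimes> inv h)"
    using rep_mult[OF rep, of "d \<otimes> h" "inv d \<otimes> inv h"] d h dh by simp
  also have "\<dots> = \<rho> ((h \<otimes> d) \<otimes> (inv d \<otimes> inv h))"
    using rep_mult[OF rep, of "h \<otimes> d" "inv d \<otimes> inv h"] d h by simp
  also have "(h \<otimes> d) \<otimes> (inv d \<otimes> inv h) = \<one>" using d h by (simp add: m_assoc[symmetric] inv_mult_group[symmetric])
  also have "\<rho> \<one> = 1\<^sub>m n" using rep_one[OF rep] .
  finally show ?thesis unfolding char_ker_iff[OF assms(1,2) irr chi] using d h by simp
qed

lemma group_center_sub_char_center:
  fixes H :: "('a, 'b) monoid_scheme" (structure)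
  assumes "group H" "finite (carrier H)" "\<chi> \<in> Irr H" "z \<in> group_center H"
  shows "z \<in> char_center H \<chi>"
proof -
  interpret group H by fact
  obtain n \<rho> where irr: "irreducible_rep H n \<rho>" and chi: "\<chi> = (\<lambda>g\<in>carrier H. mtrace (\<rho> g))"
    using assms(3) by (rule IrrE)
  have rep: "is_rep H n \<rho>" using irr_rep[OF irr] .
  have z: "z \<in> carrier H" and zc: "\<And>g. g \<in> carrier H \<Longrightarrow> z \<otimes> g = g \<otimes> z"
    using assms(4) unfolding group_center_def by auto
  have comm: "\<rho> z * \<rho> h = \<rho> h * \<rho> z" if h: "h \<in> carrier H" for h
  proof -
    have "\<rho> z * \<rho> h = \<rho> (z \<otimes> h)" using rep_mult[OF rep z h] by simp
    also have "\<dots> = \<rho> (h \<otimes> z)" using zc[OF h] by simp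
    also have "\<dots> = \<rho> h * \<rho> z" using rep_mult[OF rep h z] by simp
    finally show ?thesis .
  qed
  have "cmod (mtrace (\<rho> z)) = real n"
    by (rule schur_cmod[OF assms(1,2) irr z comm])
  thus ?thesis using z chi char_one[OF assms(1) irr chi] unfolding char_center_def by simp
qed

lemma char_center_nonzero:
  assumes "group H" "\<chi> \<in> Irr H" "g \<in> char_center H \<chi>"
  shows "\<chi> g \<noteq> 0"
proof -
  obtain n \<rho> where irr: "irreducible_rep H n \<rho>" and chi: "\<chi> = (\<lambda>g\<in>carrier H. mtrace (\<rho> g))"
    using assms(2) by (rule IrrE)
  have "n > 0" using rep_pos[OF irr_rep[OF irr]] .
  thus ?thesis using assms(3) char_one[OF assms(1) irr chi] unfolding char_center_def by auto
qed

lemma char_ker_sub_center: "char_ker H \<chi> \<subseteq> char_center H \<chi>"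
  unfolding char_ker_def char_center_def by auto

lemma group_center_subgroup:
  fixes H :: "('a, 'b) monoid_scheme" (structure)
  assumes "group H" shows "subgroup (group_center H) H"
proof -
  interpret group H by fact
  show ?thesis
  proof (rule subgroupI)
    show "group_center H \<subseteq> carrier H" unfolding group_center_def by auto
    have "\<one> \<in> group_center H" unfolding group_center_def by simp
    thus "group_center H \<noteq> {}" by blast
  next
    fix a assume a: "a \<in> group_center H"
    hence ac: "a \<in> carrier H" and c: "\<And>g. g \<in> carrier H \<Longrightarrow> a \<otimes> g = g \<otimes> a" unfolding group_center_def by auto
    have "inv a \<otimes> g = g \<otimes> inv a" if g: "g \<in> carrier H" for g
    proof -
      have "inv a \<otimes> g = inv a \<otimes> (g \<otimes> a) \<otimes> inv a" using ac g by (simp add: m_assoc)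
      also have "g \<otimes> a = a \<otimes> g" using c[OF g] by (rule sym)
      also have "inv a \<otimes> (a \<otimes> g) \<otimes> inv a = g \<otimes> inv a" using ac g by (simp add: m_assoc[symmetric])
      finally show ?thesis .
    qed
    thus "inv a \<in> group_center H" unfolding group_center_def using ac by auto
  next
    fix a b assume "a \<in> group_center H" "b \<in> group_center H"
    hence ab: "a \<in> carrier H" "b \<in> carrier H" and ca: "\<And>g. g \<in> carrier H \<Longrightarrow> a \<otimes> g = g \<otimes> a"
      and cb: "\<And>g. g \<in> carrier H \<Longrightarrow> b \<otimes> g = g \<otimes> b" unfolding group_center_def by auto
    have "a \<otimes> b \<otimes> g = g \<otimes> (a \<otimes> b)" if g: "g \<in> carrier H" for g
    proof -
      have "a \<otimes> b \<otimes> g = a \<otimes> (b \<otimes> g)" using ab g by (simp add: m_assoc)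
      also have "\<dots> = a \<otimes> (g \<otimes> b)" using cb[OF g] by simp
      also have "\<dots> = (a \<otimes> g) \<otimes> b" using ab g by (simp add: m_assoc)
      also have "\<dots> = (g \<otimes> a) \<otimes> b" using ca[OF g] by simp
      also have "\<dots> = g \<otimes> (a \<otimes> b)" using ab g by (simp add: m_assoc)
      finally show ?thesis .
    qed
    thus "a \<otimes> b \<in> group_center H" unfolding group_center_def using ab by auto
  qed
qed



lemma quot_group: "N \<lhd> G \<Longrightarrow> group (G Mod N)"
  by (rule normal.factorgroup_is_group)

lemma quot_carrier: "carrier (G Mod N) = (\<lambda>x. N #>\<^bsub>G\<^esub> x) ` carrier G"
  by (rule carrier_FactGroup)

lemma quot_finite: "finite (carrier G) \<Longrightarrow> N \<lhd> G \<Longrightarrow> finite (carrier (G Mod N))"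
  unfolding quot_carrier by simp

lemma coset_in_quot: "g \<in> carrier G \<Longrightarrow> N #>\<^bsub>G\<^esub> g \<in> carrier (G Mod N)"
  unfolding quot_carrier by simp

lemma quot_mult:
  fixes G (structure)
  assumes "N \<lhd> G" "a \<in> carrier G" "b \<in> carrier G"
  shows "(N #> a) \<otimes>\<^bsub>G Mod N\<^esub> (N #> b) = N #> (a \<otimes> b)"
  using normal.rcos_sum[OF assms(1)] assms(2,3) by simp

lemma quot_one_coset:
  fixes G (structure)
  assumes "N \<lhd> G"
  shows "N #> \<one> = N" "\<one>\<^bsub>G Mod N\<^esub> = N"
proof -
  interpret normal N G by fact
  show "N #> \<one> = N" using subset by simp
  show "\<one>\<^bsub>G Mod N\<^esub> = N" by simp
qed

lemma inflate:
  fixes G (structure)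
  assumes "group G" "N \<lhd> G" "\<psi> \<in> Irr (G Mod N)"
  shows "(\<lambda>g\<in>carrier G. \<psi> (N #> g)) \<in> Irr G"
proof -
  interpret group G by fact
  obtain n \<sigma> where irr: "irreducible_rep (G Mod N) n \<sigma>" and psi: "\<psi> = (\<lambda>C\<in>carrier (G Mod N). mtrace (\<sigma> C))"
    using assms(3) by (rule IrrE)
  have rep: "is_rep (G Mod N) n \<sigma>" using irr_rep[OF irr] .
  define \<rho> where "\<rho> g = \<sigma> (N #> g)" for g
  have isrep: "is_rep G n \<rho>"
    unfolding is_rep_def
  proof (intro conjI ballI)
    show "n > 0" using rep_pos[OF rep] .
    fix g assume g: "g \<in> carrier G"
    show "\<rho> g \<in> carrier_mat n n" unfolding \<rho>_def using rep_carrier[OF rep coset_in_quot[OF g]] .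
  next
    show "\<rho> \<one> = 1\<^sub>m n" unfolding \<rho>_def using rep_one[OF rep] quot_one_coset[OF assms(2)] by simp
  next
    fix g h assume g: "g \<in> carrier G" and h: "h \<in> carrier G"
    show "\<rho> (g \<otimes> h) = \<rho> g * \<rho> h" unfolding \<rho>_def
      using rep_mult[OF rep coset_in_quot[OF g] coset_in_quot[OF h]] quot_mult[OF assms(2) g h] by simp
  qed
  have irr2: "irreducible_rep G n \<rho>"
    unfolding irreducible_rep_def
  proof (intro conjI allI impI isrep)
    fix W assume W: "is_subspace n W \<and> (\<forall>g\<in>carrier G. \<forall>w\<in>W. \<rho> g *\<^sub>v w \<in> W)"
    have "\<forall>C\<in>carrier (G Mod N). \<forall>w\<in>W. \<sigma> C *\<^sub>v w \<in> W"
      using W unfolding quot_carrier \<rho>_def by auto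
    thus "W = {0\<^sub>v n} \<or> W = carrier_vec n" using W irr unfolding irreducible_rep_def by blast
  qed
  have "(\<lambda>g\<in>carrier G. \<psi> (N #> g)) = (\<lambda>g\<in>carrier G. mtrace (\<rho> g))"
    unfolding \<rho>_def psi by (intro ext) (auto simp: coset_in_quot)
  thus ?thesis using irr2 unfolding Irr_def by blast
qed

lemma deflate:
  fixes G (structure)
  assumes "group G" "finite (carrier G)" "N \<lhd> G" "\<chi> \<in> Irr G" "N \<subseteq> char_ker G \<chi>"
  shows "\<exists>\<psi>\<in>Irr (G Mod N). \<forall>g\<in>carrier G. \<psi> (N #> g) = \<chi> g"
proof -
  interpret group G by fact
  interpret NN: normal N G by fact
  obtain n \<rho> where irr: "irreducible_rep G n \<rho>" and chi: "\<chi> = (\<lambda>g\<in>carrier G. mtrace (\<rho> g))"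
    using assms(4) by (rule IrrE)
  have rep: "is_rep G n \<rho>" using irr_rep[OF irr] .
  have Nk: "\<rho> m = 1\<^sub>m n" if "m \<in> N" for m
    using assms(5) that char_ker_iff[OF assms(1,2) irr chi] by auto
  have key: "\<rho> g' = \<rho> g" if g: "g \<in> carrier G" and g': "g' \<in> carrier G" and eq: "N #> g = N #> g'" for g g'
  proof -
    have "g' \<in> N #> g'" using rcos_self[OF g' NN.subgroup_axioms] .
    hence "g' \<in> N #> g" using eq by simp
    then obtain m where m: "m \<in> N" "g' = m \<otimes> g" unfolding r_coset_def by auto
    have mc: "m \<in> carrier G" using m(1) NN.subset by auto
    have "\<rho> g' = \<rho> m * \<rho> g" using m rep_mult[OF rep mc g] by simp
    also have "\<dots> = \<rho> g" using Nk[OF m(1)] rep_carrier[OF rep g] by simp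
    finally show ?thesis .
  qed
  define \<sigma> where "\<sigma> C = \<rho> (SOME g. g \<in> carrier G \<and> C = N #> g)" for C
  have sig: "\<sigma> (N #> g) = \<rho> g" if g: "g \<in> carrier G" for g
  proof -
    have ex: "\<exists>x. x \<in> carrier G \<and> N #> g = N #> x" using g by blast
    define x where "x = (SOME x. x \<in> carrier G \<and> N #> g = N #> x)"
    have x: "x \<in> carrier G \<and> N #> g = N #> x" unfolding x_def by (rule someI_ex[OF ex])
    show ?thesis unfolding \<sigma>_def x_def[symmetric] using key[OF x[THEN conjunct1] g] x by simp
  qed
  have isrep: "is_rep (G Mod N) n \<sigma>"
    unfolding is_rep_def
  proof (intro conjI ballI)
    show "n > 0" using rep_pos[OF rep] .
    fix C assume "C \<in> carrier (G Mod N)"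
    then obtain g where g: "g \<in> carrier G" "C = N #> g" unfolding quot_carrier by auto
    show "\<sigma> C \<in> carrier_mat n n" using sig[OF g(1)] rep_carrier[OF rep g(1)] g(2) by simp
  next
    show "\<sigma> \<one>\<^bsub>G Mod N\<^esub> = 1\<^sub>m n"
      using sig[OF one_closed] quot_one_coset[OF assms(3)] rep_one[OF rep] by simp
  next
    fix C D assume "C \<in> carrier (G Mod N)" "D \<in> carrier (G Mod N)"
    then obtain a b where a: "a \<in> carrier G" "C = N #> a" and b: "b \<in> carrier G" "D = N #> b"
      unfolding quot_carrier by auto
    show "\<sigma> (C \<otimes>\<^bsub>G Mod N\<^esub> D) = \<sigma> C * \<sigma> D"
      using quot_mult[OF assms(3) a(1) b(1)] sig a b rep_mult[OF rep a(1) b(1)] by simp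
  qed
  have irr2: "irreducible_rep (G Mod N) n \<sigma>"
    unfolding irreducible_rep_def
  proof (intro conjI allI impI isrep)
    fix W assume W: "is_subspace n W \<and> (\<forall>C\<in>carrier (G Mod N). \<forall>w\<in>W. \<sigma> C *\<^sub>v w \<in> W)"
    have "\<forall>g\<in>carrier G. \<forall>w\<in>W. \<rho> g *\<^sub>v w \<in> W"
      using W coset_in_quot sig by metis
    thus "W = {0\<^sub>v n} \<or> W = carrier_vec n" using W irr unfolding irreducible_rep_def by blast
  qed
  define \<psi> where "\<psi> = (\<lambda>C\<in>carrier (G Mod N). mtrace (\<sigma> C))"
  have "\<psi> \<in> Irr (G Mod N)" unfolding Irr_def \<psi>_def using irr2 by blast
  moreover have "\<forall>g\<in>carrier G. \<psi> (N #> g) = \<chi> g"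
    unfolding \<psi>_def chi by (simp add: coset_in_quot sig)
  ultimately show ?thesis by blast
qed



lemma inflate_center:
  fixes G (structure)
  assumes "group G" "N \<lhd> G" "g \<in> carrier G"
  shows "g \<in> char_center G (\<lambda>g\<in>carrier G. \<psi> (N #> g)) \<longleftrightarrow> N #> g \<in> char_center (G Mod N) \<psi>"
proof -
  interpret group G by fact
  show ?thesis using assms(3) coset_in_quot[OF assms(3)] quot_one_coset[OF assms(2)]
    unfolding char_center_def by simp
qed

lemma quot_nested_gvz:
  fixes G (structure)
  assumes "group G" "N \<lhd> G" "nested_group G" "GVZ_group G"
  shows "nested_group (G Mod N) \<and> GVZ_group (G Mod N)"
proof
  interpret group G by fact
  let ?H = "G Mod N"
  let ?inf = "\<lambda>\<psi>. (\<lambda>g\<in>carrier G. \<psi> (N #> g))"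
  have cs: "char_center ?H \<psi> \<subseteq> carrier ?H" for \<psi> unfolding char_center_def by auto
  show "nested_group ?H"
    unfolding nested_group_def
  proof (intro ballI)
    fix \<psi>1 \<psi>2 assume p1: "\<psi>1 \<in> Irr ?H" and p2: "\<psi>2 \<in> Irr ?H"
    have i1: "?inf \<psi>1 \<in> Irr G" and i2: "?inf \<psi>2 \<in> Irr G" using inflate[OF assms(1,2)] p1 p2 by auto
    have trans: "char_center ?H \<psi>a \<subseteq> char_center ?H \<psi>b"
      if "char_center G (?inf \<psi>a) \<subseteq> char_center G (?inf \<psi>b)" for \<psi>a \<psi>b
    proof
      fix C assume C: "C \<in> char_center ?H \<psi>a"
      then obtain g where g: "g \<in> carrier G" "C = N #> g" using cs unfolding quot_carrier by blast
      thus "C \<in> char_center ?H \<psi>b" using C that inflate_center[OF assms(1,2) g(1)] by blast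
    qed
    show "char_center ?H \<psi>1 \<subseteq> char_center ?H \<psi>2 \<or> char_center ?H \<psi>2 \<subseteq> char_center ?H \<psi>1"
      using assms(3) i1 i2 trans unfolding nested_group_def by blast
  qed
  show "GVZ_group ?H"
    unfolding GVZ_group_def
  proof (intro ballI)
    fix \<psi> C assume p: "\<psi> \<in> Irr ?H" and C: "C \<in> carrier ?H - char_center ?H \<psi>"
    then obtain g where g: "g \<in> carrier G" "C = N #> g" unfolding quot_carrier by blast
    have "g \<notin> char_center G (?inf \<psi>)" using inflate_center[OF assms(1,2) g(1)] C g by blast
    hence "?inf \<psi> g = 0" using assms(4) inflate[OF assms(1,2) p] g unfolding GVZ_group_def by blast
    thus "\<psi> C = 0" using g by simp
  qed
qed

lemma comm_ne_one:
  fixes H (structure)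
  assumes "group H" "d \<in> carrier H" "h \<in> carrier H" "d \<otimes> h \<noteq> h \<otimes> d"
  shows "d \<otimes> h \<otimes> inv d \<otimes> inv h \<noteq> \<one>"
proof
  interpret group H by fact
  assume e: "d \<otimes> h \<otimes> inv d \<otimes> inv h = \<one>"
  have "d \<otimes> h = (d \<otimes> h \<otimes> inv d \<otimes> inv h) \<otimes> h \<otimes> d" using assms(2,3) by (simp add: m_assoc)
  also have "\<dots> = h \<otimes> d" using e assms(2,3) by simp
  finally show False using assms(4) by simp
qed

lemma abs_forward:
  fixes H (structure)
  assumes grp: "group H" and fin: "finite (carrier H)" and nt: "carrier H \<noteq> {\<one>}"
    and nest: "nested_group H" and gvz: "GVZ_group H"
  shows "U_grp H \<noteq> {\<one>}"
proof -
  interpret group H by fact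
  define S where "S = {\<psi> \<in> Irr H. \<not> char_center H \<psi> \<subseteq> group_center H}"
  define M where "M = {h \<in> carrier H. \<forall>\<psi>\<in>S. h \<in> char_ker H \<psi>}"
  have Mn: "M \<lhd> H" unfolding M_def by (rule kers_normal[OF grp fin]) (auto simp: S_def)
  have V: "V_rel H M \<subseteq> group_center H"
    unfolding V_rel_def
  proof (rule generate_subgroup_incl[OF _ group_center_subgroup[OF grp]])
    show "{h \<in> carrier H. \<exists>\<chi>\<in>Irr_rel H M. \<chi> h \<noteq> 0} \<subseteq> group_center H"
    proof
      fix h assume "h \<in> {h \<in> carrier H. \<exists>\<chi>\<in>Irr_rel H M. \<chi> h \<noteq> 0}"
      then obtain \<chi> where h: "h \<in> carrier H" and chi: "\<chi> \<in> Irr H" "\<not> M \<subseteq> char_ker H \<chi>" "\<chi> h \<noteq> 0"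
        unfolding Irr_rel_def by auto
      have "\<chi> \<notin> S" using chi(2) unfolding M_def by auto
      hence sub: "char_center H \<chi> \<subseteq> group_center H" using chi(1) unfolding S_def by auto
      have "h \<in> char_center H \<chi>" using gvz chi(1) h chi(3) unfolding GVZ_group_def by blast
      thus "h \<in> group_center H" using sub by auto
    qed
  qed
  have MU: "M \<subseteq> U_grp H"
    unfolding U_grp_def U_rel_def using Mn V by (auto intro: generate.incl)
  have "\<exists>x\<in>M. x \<noteq> \<one>"
  proof (cases "S = {}")
    case True
    hence "M = carrier H" unfolding M_def by auto
    thus ?thesis using nt one_closed by blast
  next
    case False
    then obtain \<psi>1 where "\<psi>1 \<in> S" by blast
    from ex_has_least_nat[of "\<lambda>\<psi>. \<psi> \<in> S", OF this, of "\<lambda>\<psi>. card (char_center H \<psi>)"]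
    obtain \<psi>0 where p0: "\<psi>0 \<in> S" and minc: "\<And>\<psi>. \<psi> \<in> S \<Longrightarrow> card (char_center H \<psi>0) \<le> card (char_center H \<psi>)"
      by blast
    have p0I: "\<psi>0 \<in> Irr H" using p0 unfolding S_def by auto
    obtain d where d: "d \<in> char_center H \<psi>0" "d \<notin> group_center H" using p0 unfolding S_def by auto
    have dc: "d \<in> carrier H" using d(1) unfolding char_center_def by auto
    then obtain h where h: "h \<in> carrier H" "d \<otimes> h \<noteq> h \<otimes> d" using d(2) unfolding group_center_def by auto
    define x where "x = d \<otimes> h \<otimes> inv d \<otimes> inv h"
    have xne: "x \<noteq> \<one>" unfolding x_def using comm_ne_one[OF grp dc h] .
    have finc: "finite (char_center H \<psi>)" for \<psi> using fin unfolding char_center_def by auto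
    have "x \<in> char_ker H \<psi>" if ps: "\<psi> \<in> S" for \<psi>
    proof -
      have psI: "\<psi> \<in> Irr H" using ps unfolding S_def by auto
      have "char_center H \<psi>0 \<subseteq> char_center H \<psi>"
      proof (cases "char_center H \<psi>0 \<subseteq> char_center H \<psi>")
        case False
        hence sub: "char_center H \<psi> \<subseteq> char_center H \<psi>0"
          using nest p0I psI unfolding nested_group_def by blast
        have "char_center H \<psi> = char_center H \<psi>0"
          using card_subset_eq[OF finc sub] minc[OF ps] card_mono[OF finc sub] by simp
        thus ?thesis by simp
      qed simp
      hence "d \<in> char_center H \<psi>" using d(1) by auto
      thus ?thesis unfolding x_def using center_comm_ker[OF grp fin psI _ h(1)] by simp
    qed
    moreover have "x \<in> carrier H" unfolding x_def using dc h by simp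
    ultimately have "x \<in> M" unfolding M_def by auto
    thus ?thesis using xne by blast
  qed
  thus ?thesis using MU by blast
qed

lemma forward:
  fixes G (structure)
  assumes grp: "group G" and fin: "finite (carrier G)" and ng: "nested_group G \<and> GVZ_group G"
    and N: "N \<lhd> G" "N \<noteq> carrier G"
  shows "U_grp (G Mod N) \<noteq> {\<one>\<^bsub>G Mod N\<^esub>}"
proof -
  interpret group G by fact
  interpret NN: normal N G by fact
  have qg: "group (G Mod N)" using quot_group[OF N(1)] .
  have qf: "finite (carrier (G Mod N))" using quot_finite[OF fin N(1)] .
  obtain g where g: "g \<in> carrier G" "g \<notin> N" using N(2) NN.subset by blast
  have "N #> g \<noteq> N" using rcos_self[OF g(1) NN.subgroup_axioms] g(2) by auto
  hence "carrier (G Mod N) \<noteq> {\<one>\<^bsub>G Mod N\<^esub>}" using coset_in_quot[OF g(1)] by auto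
  moreover have "nested_group (G Mod N) \<and> GVZ_group (G Mod N)"
    using quot_nested_gvz[OF grp N(1)] ng by blast
  ultimately show ?thesis using abs_forward[OF qg qf] by blast
qed



lemma U_nontriv_witness:
  fixes H (structure)
  assumes "group H" "U_grp H \<noteq> {\<one>}"
  shows "\<exists>M. M \<lhd> H \<and> V_rel H M \<subseteq> group_center H \<and> (\<exists>C\<in>M. C \<noteq> \<one>)"
proof (rule ccontr)
  interpret group H by fact
  assume "\<not> ?thesis"
  hence "\<Union>{M. M \<lhd> H \<and> V_rel H M \<subseteq> group_center H} \<subseteq> {\<one>}" by blast
  hence "U_grp H \<subseteq> {\<one>}" unfolding U_grp_def U_rel_def
    by (rule generate_subgroup_incl[OF _ triv_subgroup])
  moreover have "\<one> \<in> U_grp H" unfolding U_grp_def U_rel_def by (rule generate.one)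
  ultimately show False using assms(2) by blast
qed

lemma triv_normal:
  fixes G (structure)
  assumes "group G" shows "{\<one>} \<lhd> G"
proof -
  interpret group G by fact
  show ?thesis by (rule normal_invI[OF triv_subgroup]) auto
qed

definition PN :: "('a, 'b) monoid_scheme \<Rightarrow> 'a set \<Rightarrow> bool" where
  "PN G N \<longleftrightarrow> (\<forall>\<chi>\<in>Irr G. N \<subseteq> char_ker G \<chi> \<longrightarrow> (\<forall>g\<in>carrier G - char_center G \<chi>. \<chi> g = 0)) \<and>
     (\<forall>\<chi>\<in>Irr G. \<forall>\<psi>\<in>Irr G. N \<subseteq> char_ker G \<chi> \<longrightarrow> N \<subseteq> char_ker G \<psi> \<longrightarrow>
        char_center G \<chi> \<subseteq> char_center G \<psi> \<or> char_center G \<psi> \<subseteq> char_center G \<chi>)"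

lemma reverse_step:
  fixes G (structure)
  assumes grp: "group G" and fin: "finite (carrier G)"
    and hyp: "\<forall>N. N \<lhd> G \<and> N \<noteq> carrier G \<longrightarrow> U_grp (G Mod N) \<noteq> {\<one>\<^bsub>G Mod N\<^esub>}"
  shows "N \<lhd> G \<Longrightarrow> PN G N"
proof (induction "card (carrier G) - card N" arbitrary: N rule: less_induct)
  case less
  interpret group G by fact
  interpret NN: normal N G by fact
  show ?case
  proof (cases "N = carrier G")
    case True
    have "char_center G \<chi> = carrier G" if "carrier G \<subseteq> char_ker G \<chi>" for \<chi>
      using that char_ker_sub_center[of G \<chi>] unfolding char_center_def by auto
    thus ?thesis unfolding PN_def True by auto
  next
    case False
    let ?H = "G Mod N"
    have qg: "group ?H" using quot_group[OF less.prems] .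
    have qf: "finite (carrier ?H)" using quot_finite[OF fin less.prems] .
    have one: "\<one>\<^bsub>?H\<^esub> = N #> \<one>" using quot_one_coset[OF less.prems] by simp
    obtain Mb where Mb: "Mb \<lhd> ?H" "V_rel ?H Mb \<subseteq> group_center ?H" and C: "\<exists>C\<in>Mb. C \<noteq> \<one>\<^bsub>?H\<^esub>"
      using U_nontriv_witness[OF qg] hyp less.prems False by blast
    obtain C where C: "C \<in> Mb" "C \<noteq> N" using C quot_one_coset[OF less.prems] by auto
    have "C \<in> carrier ?H" using C(1) Mb(1) normal_imp_subgroup subgroup.subset by blast
    then obtain g0 where g0: "g0 \<in> carrier G" "C = N #> g0" unfolding quot_carrier by auto
    have g0N: "g0 \<notin> N" using NN.rcos_const[OF grp] g0 C(2) by auto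
    define T where "T = {\<chi> \<in> Irr G. N \<subseteq> char_ker G \<chi> \<and> (\<forall>g\<in>carrier G. N #> g \<in> Mb \<longrightarrow> g \<in> char_ker G \<chi>)}"
    define M where "M = {g \<in> carrier G. \<forall>\<chi>\<in>T. g \<in> char_ker G \<chi>}"
    have Mn: "M \<lhd> G" unfolding M_def by (rule kers_normal[OF grp fin]) (auto simp: T_def)
    have NM: "N \<subseteq> M" unfolding M_def T_def using NN.subset by auto
    have g0M: "g0 \<in> M" unfolding M_def T_def using g0 C(1) by auto
    have finM: "finite M" using fin Mn normal_imp_subgroup subgroup.subset by (metis finite_subset)
    have "card N < card M" using psubset_card_mono[OF finM] NM g0M g0N by blast
    moreover have "card M \<le> card (carrier G)" using fin Mn normal_imp_subgroup subgroup.subset by (metis card_mono)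
    ultimately have "card (carrier G) - card M < card (carrier G) - card N" by simp
    hence IH: "PN G M" using less.hyps Mn by blast
    define Zn where "Zn = {x \<in> carrier G. N #> x \<in> group_center ?H}"
    have A: "Zn \<subseteq> char_center G \<chi>" if chi: "\<chi> \<in> Irr G" "N \<subseteq> char_ker G \<chi>" for \<chi>
    proof
      fix x assume x: "x \<in> Zn"
      obtain \<psi> where psi: "\<psi> \<in> Irr ?H" "\<forall>g\<in>carrier G. \<psi> (N #> g) = \<chi> g"
        using deflate[OF grp fin less.prems chi] by blast
      have xc: "x \<in> carrier G" and xz: "N #> x \<in> group_center ?H" using x unfolding Zn_def by auto
      have "N #> x \<in> char_center ?H \<psi>" using group_center_sub_char_center[OF qg qf psi(1) xz] .
      hence "cmod (\<psi> (N #> x)) = cmod (\<psi> (N #> \<one>))" unfolding char_center_def one by simp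
      thus "x \<in> char_center G \<chi>" using psi(2) xc unfolding char_center_def by simp
    qed
    have B: "\<chi> x \<noteq> 0 \<Longrightarrow> x \<in> Zn" if chi: "\<chi> \<in> Irr G" "N \<subseteq> char_ker G \<chi>" "\<chi> \<notin> T" and x: "x \<in> carrier G" for \<chi> x
    proof -
      assume nz: "\<chi> x \<noteq> 0"
      obtain g where g: "g \<in> carrier G" "N #> g \<in> Mb" "g \<notin> char_ker G \<chi>" using chi unfolding T_def by auto
      obtain \<psi> where psi: "\<psi> \<in> Irr ?H" "\<forall>g\<in>carrier G. \<psi> (N #> g) = \<chi> g"
        using deflate[OF grp fin less.prems chi(1,2)] by blast
      have psi1: "\<psi> N = \<chi> \<one>" using psi(2) one_closed quot_one_coset(1)[OF less.prems] by metis
      have "\<psi> (N #> g) \<noteq> \<psi> \<one>\<^bsub>?H\<^esub>" using psi(2) g psi1 unfolding char_ker_def by auto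
      hence "N #> g \<notin> char_ker ?H \<psi>" unfolding char_ker_def by auto
      hence "\<psi> \<in> Irr_rel ?H Mb" using psi(1) g(2) unfolding Irr_rel_def by auto
      moreover have "\<psi> (N #> x) \<noteq> 0" using psi(2) x nz by simp
      ultimately have "N #> x \<in> V_rel ?H Mb" unfolding V_rel_def using coset_in_quot[OF x]
        by (auto intro: generate.incl)
      thus "x \<in> Zn" using Mb(2) x unfolding Zn_def by auto
    qed
    have Cc: "char_center G \<chi> = Zn" if chi: "\<chi> \<in> Irr G" "N \<subseteq> char_ker G \<chi>" "\<chi> \<notin> T" for \<chi>
    proof
      show "char_center G \<chi> \<subseteq> Zn"
      proof
        fix x assume x: "x \<in> char_center G \<chi>"
        hence "x \<in> carrier G" unfolding char_center_def by auto
        thus "x \<in> Zn" using B[OF chi] char_center_nonzero[OF grp chi(1) x] by blast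
      qed
      show "Zn \<subseteq> char_center G \<chi>" using A chi by blast
    qed
    have TM: "M \<subseteq> char_ker G \<chi>" if "\<chi> \<in> T" for \<chi> using that unfolding M_def T_def
      using char_ker_props(5)[OF grp fin] by auto
    have TI: "\<chi> \<in> Irr G" if "\<chi> \<in> T" for \<chi> using that unfolding T_def by auto
    show ?thesis unfolding PN_def
    proof (intro conjI ballI impI)
      fix \<chi> g assume chi: "\<chi> \<in> Irr G" "N \<subseteq> char_ker G \<chi>" and g: "g \<in> carrier G - char_center G \<chi>"
      show "\<chi> g = 0"
      proof (cases "\<chi> \<in> T")
        case True
        then show ?thesis using IH TM g chi unfolding PN_def by blast
      next
        case False
        then show ?thesis using B[OF chi False] g A[OF chi] by blast
      qed
    next
      fix \<chi> \<psi> assume chi: "\<chi> \<in> Irr G" and psi: "\<psi> \<in> Irr G"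
        and kc: "N \<subseteq> char_ker G \<chi>" and kp: "N \<subseteq> char_ker G \<psi>"
      show "char_center G \<chi> \<subseteq> char_center G \<psi> \<or> char_center G \<psi> \<subseteq> char_center G \<chi>"
      proof (cases "\<chi> \<in> T")
        case True
        show ?thesis
        proof (cases "\<psi> \<in> T")
          case True
          then show ?thesis using IH TM \<open>\<chi> \<in> T\<close> chi psi unfolding PN_def by blast
        next
          case False
          then show ?thesis using Cc[OF psi kp False] A[OF chi kc] by blast
        qed
      next
        case False
        show ?thesis
        proof (cases "\<psi> \<in> T")
          case True
          then show ?thesis using Cc[OF chi kc False] A[OF psi kp] by blast
        next
          case False
          then show ?thesis using Cc[OF psi kp False] Cc[OF chi kc \<open>\<chi> \<notin> T\<close>] by blast
        qed
      qed
    qed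
  qed
qed

lemma reverse:
  fixes G (structure)
  assumes grp: "group G" and fin: "finite (carrier G)"
    and hyp: "\<forall>N. N \<lhd> G \<and> N \<noteq> carrier G \<longrightarrow> U_grp (G Mod N) \<noteq> {\<one>\<^bsub>G Mod N\<^esub>}"
  shows "nested_group G \<and> GVZ_group G"
proof -
  have P: "PN G {\<one>}" using reverse_step[OF grp fin hyp triv_normal[OF grp]] .
  have k: "{\<one>} \<subseteq> char_ker G \<chi>" if "\<chi> \<in> Irr G" for \<chi>
    using char_ker_props(1)[OF grp fin that] by simp
  show ?thesis using P k unfolding PN_def nested_group_def GVZ_group_def by blast
qed


theorem theoremI:
  fixes G :: "('a, 'b) monoid_scheme"
  assumes "group G" and "finite (carrier G)"
  shows "(nested_group G \<and> GVZ_group G) \<longleftrightarrow>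
    (\<forall>N. N \<lhd> G \<and> N \<noteq> carrier G \<longrightarrow> U_grp (G Mod N) \<noteq> {\<one>\<^bsub>G Mod N\<^esub>})"
proof
  assume "nested_group G \<and> GVZ_group G"
  thus "\<forall>N. N \<lhd> G \<and> N \<noteq> carrier G \<longrightarrow> U_grp (G Mod N) \<noteq> {\<one>\<^bsub>G Mod N\<^esub>}"
    using forward[OF assms] by blast
next
  assume "\<forall>N. N \<lhd> G \<and> N \<noteq> carrier G \<longrightarrow> U_grp (G Mod N) \<noteq> {\<one>\<^bsub>G Mod N\<^esub>}"
  thus "nested_group G \<and> GVZ_group G" using reverse[OF assms] by blast
qed

end
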